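(* Let $H$ be as in the setting, invariant under $R$ and under at least one of $F$, $V$. Then every eigenfunction of $H(\vec k^* )$ belonging to $\mathcal X_1(\vec k^* )\oplus\mathcal X_2(\vec k^* )$ (these carry the degenerate eigenvalues, i.e. the common eigenvalues of the isospectral operators $Q_1$, $Q_2$) and which is continuous vanishes at the center of the hexagonal fundamental domain $\Omega_H$, i.e. at the origin.
   Context: Hexagonal lattice: $\vec a_1=(\sqrt3/2,1/2)^T$, $\vec a_2=(\sqrt3/2,-1/2)^T$, $\Gamma=\{n_1\vec a_1+n_2\vec a_2:n_1,n_2\in\mathbb Z\}$. $\mathcal X(\vec k)$ is the space of $\psi\in L^2_{\rm loc}(\mathbb R^2)$ with $\psi(\vec x+n_1\vec a_1+n_2\vec a_2)=e^{i(n_1k_1+n_2k_2)}\psi(\vec x)$. $\Omega_H$ is the hexagonal fundamental domain (Voronoi cell) of $\Gamma$ centered at the origin. $\vec k^*=(2\pi/3,-2\pi/3)$, $\tau=e^{2\pi i/3}$. Symmetries: $R\psi(x_1,x_2)=\psi(-\tfrac12x_1+\tfrac{\sqrt3}2x_2,-\tfrac{\sqrt3}2x_1-\tfrac12x_2)$, $V\psi(\vec x)=\psi(-\vec x)$, $F\psi(x_1,x_2)=\psi(-x_1,x_2)$. $\mathcal X_j(\vec k^* )=\{\psi\in\mathcal X(\vec k^* ):R\psi=\tau^{-j}\psi\}$; $Q_j$ denotes the restriction of $H(\vec k^* )$ to $\mathcal X_j(\vec k^* )$ (realized on one third of $\Omega_H$). Setting: $H$ is a self-adjoint operator on functions on $\mathbb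 R^2$ (e.g. $-\Delta+q$ with real $\Gamma$-periodic $q$) commuting with translations by $\Gamma$ and with complex conjugation; $H(\vec k)$ is its restriction to $\mathcal X(\vec k)$. *)

theory Defs
  imports "HOL-Analysis.Analysis"
begin

type_synonym pt = "real \<times> real"
type_synonym fn = "pt \<Rightarrow> complex"

definition a1 :: pt where "a1 = (sqrt 3 / 2, 1 / 2)"
definition a2 :: pt where "a2 = (sqrt 3 / 2, - 1 / 2)"

definition latpt :: "int \<Rightarrow> int \<Rightarrow> pt" where
  "latpt n1 n2 = of_int n1 *\<^sub>R a1 + of_int n2 *\<^sub>R a2"

definition Gamma :: "pt set" where
  "Gamma = {latpt n1 n2 | n1 n2. True}"

definition Omega_H :: "pt set" where
  "Omega_H = {x. \<forall>g\<in>Gamma. norm x \<le> norm (x - g)}"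

definition L2loc :: "fn \<Rightarrow> bool" where
  "L2loc \<psi> \<longleftrightarrow> \<psi> \<in> borel_measurable lborel \<and>
     (\<forall>K. compact K \<longrightarrow> set_integrable lborel K (\<lambda>x. (norm (\<psi> x))\<^sup>2))"

text \<open>The space X(k) (functions are L2_loc, so quasi-periodicity holds almost everywhere).\<close>
definition Xk :: "pt \<Rightarrow> fn \<Rightarrow> bool" where
  "Xk k \<psi> \<longleftrightarrow> L2loc \<psi> \<and>
     (\<forall>n1 n2. AE x in lborel.
        \<psi> (x + latpt n1 n2) = cis (of_int n1 * fst k + of_int n2 * snd k) * \<psi> x)"

definition kstar :: pt where "kstar = (2 * pi / 3, - 2 * pi / 3)"

definition tau :: complex where "tau = cis (2 * pi / 3)"

definition Rop :: "fn \<Rightarrow> fn" where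
  "Rop \<psi> = (\<lambda>(x1, x2). \<psi> (- (1/2) * x1 + sqrt 3 / 2 * x2, - (sqrt 3 / 2) * x1 - (1/2) * x2))"

definition Vop :: "fn \<Rightarrow> fn" where
  "Vop \<psi> = (\<lambda>x. \<psi> (- x))"

definition Fop :: "fn \<Rightarrow> fn" where
  "Fop \<psi> = (\<lambda>(x1, x2). \<psi> (- x1, x2))"

definition Xj :: "nat \<Rightarrow> fn \<Rightarrow> bool" where
  "Xj j \<psi> \<longleftrightarrow> Xk kstar \<psi> \<and> (AE x in lborel. Rop \<psi> x = inverse tau ^ j * \<psi> x)"

definition ipH :: "fn \<Rightarrow> fn \<Rightarrow> complex" where
  "ipH f g = set_lebesgue_integral lborel Omega_H (\<lambda>x. f x * cnj (g x))"

definition lin_op :: "(fn \<Rightarrow> fn) \<Rightarrow> fn set \<Rightarrow> bool" where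
  "lin_op H D \<longleftrightarrow> (\<lambda>x. 0) \<in> D \<and>
     (\<forall>f\<in>D. \<forall>g\<in>D. \<forall>a b::complex. (\<lambda>x. a * f x + b * g x) \<in> D \<and>
        (AE x in lborel. H (\<lambda>y. a * f y + b * g y) x = a * H f x + b * H g x))"

definition commutes_with :: "(fn \<Rightarrow> fn) \<Rightarrow> fn set \<Rightarrow> (fn \<Rightarrow> fn) \<Rightarrow> bool" where
  "commutes_with H D S \<longleftrightarrow>
     (\<forall>\<psi>\<in>D. S \<psi> \<in> D \<and> (AE x in lborel. H (S \<psi>) x = S (H \<psi>) x))"

definition transl :: "pt \<Rightarrow> fn \<Rightarrow> fn" where
  "transl g \<psi> = (\<lambda>x. \<psi> (x + g))"

definition conjop :: "fn \<Rightarrow> fn" where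
  "conjop \<psi> = (\<lambda>x. cnj (\<psi> x))"

text \<open>H(k), the restriction of H to X(k), is self-adjoint on L2(Omega_H):
  it maps D \<inter> X(k) into X(k), and its adjoint coincides with it
  (same domain, same action up to a.e. equality).\<close>
definition Hk_selfadjoint :: "(fn \<Rightarrow> fn) \<Rightarrow> fn set \<Rightarrow> pt \<Rightarrow> bool" where
  "Hk_selfadjoint H D k \<longleftrightarrow>
     (\<forall>\<psi>. \<psi> \<in> D \<and> Xk k \<psi> \<longrightarrow> Xk k (H \<psi>)) \<and>
     (\<forall>\<phi>. Xk k \<phi> \<longrightarrow> (\<phi> \<in> D \<longleftrightarrow>
          (\<exists>g. Xk k g \<and> (\<forall>\<psi>. \<psi> \<in> D \<and> Xk k \<psi> \<longrightarrow> ipH (H \<psi>) \<phi> = ipH \<psi> g)))) \<and>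
     (\<forall>\<phi> g. \<phi> \<in> D \<and> Xk k \<phi> \<and> Xk k g \<and>
          (\<forall>\<psi>. \<psi> \<in> D \<and> Xk k \<psi> \<longrightarrow> ipH (H \<psi>) \<phi> = ipH \<psi> g)
          \<longrightarrow> (AE x in lborel. H \<phi> x = g x))"

definition eigenfunction_Hk :: "(fn \<Rightarrow> fn) \<Rightarrow> fn set \<Rightarrow> pt \<Rightarrow> fn \<Rightarrow> bool" where
  "eigenfunction_Hk H D k \<psi> \<longleftrightarrow> \<psi> \<in> D \<and> Xk k \<psi> \<and> \<not> (AE x in lborel. \<psi> x = 0) \<and>
     (\<exists>ev::complex. AE x in lborel. H \<psi> x = ev * \<psi> x)"

end

theory Submission
  imports Defs
begin

definition rho :: "pt \<Rightarrow> pt" where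
  "rho x = (- (1/2) * fst x + sqrt 3 / 2 * snd x, - (sqrt 3 / 2) * fst x - (1/2) * snd x)"

lemma Rop_rho: "Rop f x = f (rho x)"
  by (cases x) (simp add: Rop_def rho_def)

lemma rho_diff: "rho y - rho x = rho (y - x)"
  by (simp add: rho_def prod_eq_iff field_simps)

lemma rho_norm: "norm (rho x) = norm x"
proof -
  have s: "sqrt 3 * sqrt 3 = 3" by simp
  have "(- (1/2) * a + sqrt 3 / 2 * b)\<^sup>2 + (- (sqrt 3 / 2) * a - (1/2) * b)\<^sup>2 = a\<^sup>2 + b\<^sup>2"
    for a b :: real
    by (simp add: power2_eq_square algebra_simps s)
  then show ?thesis
    by (cases x) (simp add: rho_def norm_Pair real_norm_def)
qed

lemma rho3: "rho (rho (rho x)) = x"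
proof -
  have s: "sqrt 3 * sqrt 3 = 3" by simp
  show ?thesis
    by (cases x) (simp add: rho_def algebra_simps s)
qed

lemma rho0: "rho (0,0) = (0,0)" by (simp add: rho_def)

lemma cont_rho: "continuous_on UNIV rho"
  unfolding rho_def by (intro continuous_intros)

lemma neg_rho_image:
  assumes "negligible S"
  shows "negligible (rho ` S)"
proof (rule negligible_locally_Lipschitz_image)
  show "DIM(pt) \<le> DIM(pt)" by simp
  show "negligible S" by fact
  fix x assume "x \<in> S"
  show "\<exists>T B. open T \<and> x \<in> T \<and> (\<forall>y\<in>S \<inter> T. norm (rho y - rho x) \<le> B * norm (y - x))"
    by (rule exI[of _ UNIV], rule exI[of _ 1]) (simp add: rho_diff rho_norm)
qed

lemma AE_rho:
  assumes "AE x in lebesgue. P x"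
  shows "AE x in (lebesgue :: pt measure). P (rho x)"
proof -
  obtain N where N: "{x \<in> space lebesgue. \<not> P x} \<subseteq> N" "N \<in> null_sets lebesgue"
    by (rule AE_E[OF assms]) blast
  have "negligible N" using N(2) negligible_iff_null_sets by blast
  then have "negligible (rho ` rho ` N)" by (intro neg_rho_image)
  then have nn: "rho ` rho ` N \<in> null_sets lebesgue" using negligible_iff_null_sets by blast
  have "{x \<in> space lebesgue. \<not> P (rho x)} \<subseteq> rho ` rho ` N"
  proof
    fix x assume "x \<in> {x \<in> space lebesgue. \<not> P (rho x)}"
    then have "rho x \<in> N" using N(1) by auto
    moreover have "x = rho (rho (rho x))" by (simp add: rho3)
    ultimately show "x \<in> rho ` rho ` N" by blast
  qed
  then show ?thesis using nn by (rule AE_I'[rotated])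
qed

lemma cube_root: fixes z :: complex assumes "z ^ 3 = 1" "z \<noteq> 1" shows "1 + z + z\<^sup>2 = 0"
proof -
  have "(z - 1) * (1 + z + z\<^sup>2) = z ^ 3 - 1" by (simp add: algebra_simps power2_eq_square power3_eq_cube)
  then have "(z - 1) * (1 + z + z\<^sup>2) = 0" using assms by simp
  then show ?thesis using assms by simp
qed

lemma tau3: "tau ^ 3 = 1"
proof -
  have "tau ^ 3 = cis (2 * pi / 3 + 2 * pi / 3 + 2 * pi / 3)"
    unfolding tau_def power3_eq_cube by (simp only: cis_mult)
  also have "2 * pi / 3 + 2 * pi / 3 + 2 * pi / 3 = 2 * pi" by simp
  finally show ?thesis by simp
qed

lemma tau_ne1: "tau \<noteq> 1"
proof
  assume "tau = 1"
  then have "Re tau = 1" by simp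
  then show False by (simp add: tau_def cos_120)
qed

lemma mainTheorem8_aux:
  fixes \<psi> :: fn
  assumes sum12: "\<exists>\<psi>1 \<psi>2. Xj 1 \<psi>1 \<and> Xj 2 \<psi>2 \<and> (AE x in lborel. \<psi> x = \<psi>1 x + \<psi>2 x)"
    and cont: "continuous_on UNIV \<psi>"
  shows "\<psi> (0, 0) = 0"
proof -
  obtain \<psi>1 \<psi>2 where X1: "Xj 1 \<psi>1" and X2: "Xj 2 \<psi>2" and S: "AE x in lborel. \<psi> x = \<psi>1 x + \<psi>2 x"
    using sum12 by blast
  define c where "c = inverse tau"
  have c3: "c ^ 3 = 1" by (simp add: c_def tau3 power_inverse)
  have cn1: "c \<noteq> 1" using tau_ne1 by (auto simp: c_def)
  have c2_3: "(c\<^sup>2) ^ 3 = 1" using c3 by (metis power_mult mult.commute power_one)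
  have c2n1: "c\<^sup>2 \<noteq> 1"
  proof
    assume "c\<^sup>2 = 1"
    then have "c ^ 3 = c" by (simp add: power3_eq_cube power2_eq_square)
    then show False using c3 cn1 by simp
  qed
  have z1: "1 + c + c\<^sup>2 = 0" by (rule cube_root[OF c3 cn1])
  have z2: "1 + c\<^sup>2 + (c\<^sup>2)\<^sup>2 = 0" by (rule cube_root[OF c2_3 c2n1])
  have A1: "AE x in lebesgue. \<psi>1 (rho x) = c * \<psi>1 x"
    using X1 unfolding Xj_def c_def by (auto simp: Rop_rho intro: AE_completion)
  have A2: "AE x in lebesgue. \<psi>2 (rho x) = c\<^sup>2 * \<psi>2 x"
    using X2 unfolding Xj_def c_def by (auto simp: Rop_rho intro: AE_completion)
  have S0: "AE x in lebesgue. \<psi> x = \<psi>1 x + \<psi>2 x" using S by (rule AE_completion)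
  note S1 = AE_rho[OF S0]
  note S2 = AE_rho[OF S1]
  note A1' = AE_rho[OF A1]
  note A2' = AE_rho[OF A2]
  have AE0: "AE x in lebesgue. \<psi> x + \<psi> (rho x) + \<psi> (rho (rho x)) = 0"
    using S0 S1 S2 A1 A2 A1' A2'
  proof eventually_elim
    case (elim x)
    have "\<psi> x + \<psi> (rho x) + \<psi> (rho (rho x))
        = (1 + c + c\<^sup>2) * \<psi>1 x + (1 + c\<^sup>2 + (c\<^sup>2)\<^sup>2) * \<psi>2 x"
      using elim by (simp add: algebra_simps power2_eq_square)
    then show ?case using z1 z2 by simp
  qed
  define f where "f x = \<psi> x + \<psi> (rho x) + \<psi> (rho (rho x))" for x
  have cf: "continuous_on UNIV f"
  proof -
    have r: "continuous_on UNIV (\<lambda>x. \<psi> (rho x))"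
      by (rule continuous_on_compose2[OF cont cont_rho]) auto
    have rr: "continuous_on UNIV (\<lambda>x. \<psi> (rho (rho x)))"
      by (rule continuous_on_compose2[OF r cont_rho]) auto
    show ?thesis unfolding f_def by (intro continuous_intros cont r rr)
  qed
  have "f (0,0) = 0"
  proof (rule ccontr)
    assume ne: "f (0,0) \<noteq> 0"
    let ?U = "{x. f x \<noteq> 0}"
    have oU: "open ?U"
      by (rule open_Collect_neq[OF cf continuous_on_const])
    have AEf: "AE x in lebesgue. f x = 0" using AE0 unfolding f_def .
    obtain N where N: "{x \<in> space lebesgue. \<not> f x = 0} \<subseteq> N" "N \<in> null_sets lebesgue"
      by (rule AE_E[OF AEf]) blast
    have "?U \<subseteq> N" using N(1) by auto
    then have "negligible ?U"
      using N(2) negligible_iff_null_sets negligible_subset by blast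
    moreover have "?U \<noteq> {}" using ne by auto
    ultimately show False using open_not_negligible oU by blast
  qed
  then have "3 * \<psi> (0,0) = 0" by (simp add: f_def rho0)
  then show ?thesis by simp
qed

theorem mainTheorem8:
  fixes H :: "fn \<Rightarrow> fn" and D :: "fn set" and \<psi> :: fn
  assumes lin: "lin_op H D"
    and sa: "\<forall>k. Hk_selfadjoint H D k"
    and transl_inv: "\<forall>g\<in>Gamma. commutes_with H D (transl g)"
    and conj_inv: "commutes_with H D conjop"
    and R_inv: "commutes_with H D Rop"
    and FV_inv: "commutes_with H D Fop \<or> commutes_with H D Vop"
    and eig: "eigenfunction_Hk H D kstar \<psi>"
    and sum12: "\<exists>\<psi>1 \<psi>2. Xj 1 \<psi>1 \<and> Xj 2 \<psi>2 \<and> (AE x in lborel. \<psi> x = \<psi>1 x + \<psi>2 x)"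
    and cont: "continuous_on UNIV \<psi>"
  shows "\<psi> (0, 0) = 0"
  using mainTheorem8_aux[OF sum12 cont] .

end
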